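(* Fix $\alpha\in(0,1)$. Let $u\in C([-1,1])$ be monotone. Then for every $\varepsilon>0$ there exists an $\alpha$-power piecewise linear function $g$ such that $|u(x)-g(x)|\le\varepsilon$ for all $x\in[-1,1]$.
   Context: A piecewise linear (PL) function is a continuous function $g:\mathbb{R}\to\mathbb{R}$ which is affine on each of finitely many intervals partitioning $\mathbb{R}$ (separated by finitely many breakpoints). A PL function $g$ is called $\alpha$-power PL if there is a constant $c\in\mathbb{R}$ such that the slope of every linear piece of $g$ lies in $\{c\alpha^k: k\in\mathbb{Z}\}$. *)

theory Defs
  imports "HOL-Analysis.Analysis"
begin

definition piece :: "real list \<Rightarrow> nat \<Rightarrow> real set" where
  "piece bs i =
     (if length bs = 0 then UNIV
      else if i = 0 then {..bs ! 0}
      else if i = length bs then {bs ! (length bs - 1)..}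
      else {bs ! (i - 1) .. bs ! i})"

definition pl_data :: "(real \<Rightarrow> real) \<Rightarrow> real list \<Rightarrow> real list \<Rightarrow> real list \<Rightarrow> bool" where
  "pl_data g bs ms cs \<longleftrightarrow>
     continuous_on UNIV g \<and> sorted_wrt (<) bs \<and>
     length ms = length bs + 1 \<and> length cs = length bs + 1 \<and>
     (\<forall>i \<le> length bs. \<forall>x \<in> piece bs i. g x = ms ! i * x + cs ! i)"

definition piecewise_linear :: "(real \<Rightarrow> real) \<Rightarrow> bool" where
  "piecewise_linear g \<longleftrightarrow> (\<exists>bs ms cs. pl_data g bs ms cs)"

definition alpha_power_pl :: "real \<Rightarrow> (real \<Rightarrow> real) \<Rightarrow> bool" where
  "alpha_power_pl \<alpha> g \<longleftrightarrow>
     (\<exists>bs ms cs c. pl_data g bs ms cs \<and>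
        (\<forall>m \<in> set ms. \<exists>k::int. m = c * \<alpha> powi k))"

end

theory Submission imports Defs begin

definition Q :: "real \<Rightarrow> (real \<Rightarrow> real) \<Rightarrow> real \<Rightarrow> bool" where
  "Q \<alpha> g A \<longleftrightarrow> (\<exists>bs ms cs. pl_data g bs ms cs \<and> (\<forall>m\<in>set ms. \<exists>k::int. m = \<alpha> powi k)
      \<and> (\<forall>b\<in>set bs. b < A))"

lemma piece_append_le:
  assumes "i \<le> length bs" "\<forall>b\<in>set bs. b \<le> a"
  shows "piece (bs@[a]) i \<subseteq> piece bs i \<inter> {..a}"
proof (cases "i < length bs")
  case True
  then have "bs ! i \<le> a" using assms(2) by auto
  moreover have "piece (bs@[a]) i = piece bs i" using True
    by (auto simp: piece_def nth_append)
  moreover have "piece bs i \<subseteq> {..bs!i}" using True by (auto simp: piece_def)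
  ultimately show ?thesis by auto
next
  case False
  then have i: "i = length bs" using assms by auto
  show ?thesis
  proof (cases "bs = []")
    case True then show ?thesis using i by (auto simp: piece_def)
  next
    case False then show ?thesis using i by (auto simp: piece_def nth_append)
  qed
qed

lemma piece_append_last: "piece (bs@[a]) (Suc (length bs)) = {a..}"
  by (auto simp: piece_def nth_append)

definition ext :: "(real \<Rightarrow> real) \<Rightarrow> real \<Rightarrow> real \<Rightarrow> real \<Rightarrow> real" where
  "ext g a m x = g (min x a) + m * max 0 (x - a)"

lemma ext_le: "x \<le> a \<Longrightarrow> ext g a m x = g x" by (simp add: ext_def)
lemma ext_ge: "a \<le> x \<Longrightarrow> ext g a m x = g a + m * (x - a)" by (simp add: ext_def)

lemma Q_append:
  assumes "Q \<alpha> g A" "A \<le> a" "a < A'" "\<exists>k::int. m = \<alpha> powi k"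
  shows "Q \<alpha> (ext g a m) A'"
proof -
  obtain bs ms cs where pd: "pl_data g bs ms cs" and sl: "\<forall>m\<in>set ms. \<exists>k::int. m = \<alpha> powi k"
    and bb: "\<forall>b\<in>set bs. b < A" using assms(1) unfolding Q_def by blast
  have cont: "continuous_on UNIV g" and srt: "sorted_wrt (<) bs" and lm: "length ms = length bs + 1"
    and lc: "length cs = length bs + 1"
    and pc: "\<forall>i \<le> length bs. \<forall>x \<in> piece bs i. g x = ms ! i * x + cs ! i"
    using pd unfolding pl_data_def by auto
  have ba: "\<forall>b\<in>set bs. b \<le> a" using bb assms(2) by force
  have "continuous_on UNIV (ext g a m)"
    unfolding ext_def
    by (intro continuous_intros continuous_on_compose2[OF cont]) auto
  moreover have "sorted_wrt (<) (bs @ [a])" using srt bb assms(2)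
    by (auto simp: sorted_wrt_append)
  moreover have "\<forall>i \<le> length (bs@[a]). \<forall>x \<in> piece (bs@[a]) i.
      ext g a m x = (ms@[m]) ! i * x + (cs@[g a - m*a]) ! i"
  proof (intro allI impI ballI)
    fix i x assume i: "i \<le> length (bs@[a])" and x: "x \<in> piece (bs@[a]) i"
    show "ext g a m x = (ms@[m]) ! i * x + (cs@[g a - m*a]) ! i"
    proof (cases "i \<le> length bs")
      case True
      with piece_append_le[OF True ba] x have "x \<in> piece bs i" "x \<le> a" by auto
      then show ?thesis using pc True lm lc by (simp add: ext_le nth_append)
    next
      case False
      then have "i = Suc (length bs)" using i by auto
      then show ?thesis using x piece_append_last[of bs a] lm lc
        by (auto simp: ext_ge nth_append algebra_simps)
    qed
  qed
  ultimately have "pl_data (ext g a m) (bs@[a]) (ms@[m]) (cs@[g a - m*a])"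
    unfolding pl_data_def using lm lc by simp
  moreover have "\<forall>b\<in>set (bs@[a]). b < A'" using bb assms by force
  moreover have "\<forall>m\<in>set (ms@[m]). \<exists>k::int. m = \<alpha> powi k" using sl assms(4) by auto
  ultimately show ?thesis unfolding Q_def by blast
qed


lemma pow_above: fixes \<alpha> s :: real assumes "0<\<alpha>" "\<alpha><1" shows "\<exists>k::int. s < \<alpha> powi k"
proof -
  have "1 < 1/\<alpha>" using one_less_inverse[OF assms] by (simp add: inverse_eq_divide)
  from real_arch_pow[OF this, of s] obtain n where "s < (1/\<alpha>)^n" by blast
  then have "s < \<alpha> powi (- int n)" by (simp add: power_int_minus power_one_over inverse_eq_divide)
  then show ?thesis by blast
qed

lemma pow_below: fixes \<alpha> s :: real assumes "0<\<alpha>" "\<alpha><1" "0 < s" shows "\<exists>k::int. \<alpha> powi k < s"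
proof -
  obtain n where "\<alpha>^n < s" using real_arch_pow_inv[of s \<alpha>] assms by blast
  then have "\<alpha> powi (int n) < s" by simp
  then show ?thesis by blast
qed

lemma Q_step:
  assumes "0<\<alpha>" "\<alpha><1" "Q \<alpha> g A" "A \<le> x0" "h > 0" "s > 0"
  shows "\<exists>g'. Q \<alpha> g' (x0 + h) \<and> (\<forall>x\<le>x0. g' x = g x) \<and> g' (x0+h) = g x0 + s*h
     \<and> (\<forall>x\<in>{x0..x0+h}. g x0 \<le> g' x \<and> g' x \<le> g x0 + s*h)"
proof -
  obtain k1 where k1: "s < \<alpha> powi k1" using pow_above[OF assms(1,2)] by blast
  obtain k2 where k2: "\<alpha> powi k2 < s" using pow_below[OF assms(1,2,6)] by blast
  define M where "M = \<alpha> powi k1"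
  define m where "m = \<alpha> powi k2"
  have mpos: "m > 0" unfolding m_def using assms(1) by simp
  have sM: "s < M" "m < s" using k1 k2 M_def m_def by auto
  define t where "t = h * (s - m) / (M - m)"
  have t0: "0 < t" unfolding t_def using sM assms(5) by simp
  have th: "t < h" unfolding t_def using sM assms(5) by (simp add: field_simps)
  have teq: "M*t + m*(h - t) = s*h"
  proof -
    have "M*t + m*(h - t) = (M - m)*t + m*h" by (simp add: algebra_simps)
    also have "(M - m)*t = h*(s-m)" unfolding t_def using sM by simp
    finally show ?thesis by (simp add: algebra_simps)
  qed
  define g1 where "g1 = ext g x0 M"
  define g2 where "g2 = ext g1 (x0+t) m"
  have Q1: "Q \<alpha> g1 (x0+t)" unfolding g1_def
    by (rule Q_append[OF assms(3) assms(4)]) (use t0 M_def in auto)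
  have Q2: "Q \<alpha> g2 (x0+h)" unfolding g2_def
    by (rule Q_append[OF Q1]) (use th m_def in auto)
  have e1: "\<forall>x\<le>x0. g2 x = g x" using t0 by (simp add: g2_def g1_def ext_le)
  have e2: "\<forall>x\<in>{x0..x0+t}. g2 x = g x0 + M*(x-x0)"
    by (simp add: g2_def g1_def ext_le ext_ge)
  have e3: "\<forall>x\<in>{x0+t..}. g2 x = g x0 + M*t + m*(x-x0-t)" using t0
    by (simp add: g2_def g1_def ext_le ext_ge algebra_simps)
  have "g2 (x0+h) = g x0 + M*t + m*(x0+h-x0-t)" using e3 th by auto
  then have fin: "g2 (x0+h) = g x0 + s*h" using teq by (simp add: algebra_simps)
  have bnd: "\<forall>x\<in>{x0..x0+h}. g x0 \<le> g2 x \<and> g2 x \<le> g x0 + s*h"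
  proof
    fix x assume x: "x \<in> {x0..x0+h}"
    have Mp: "M > 0" using sM assms(6) by simp
    show "g x0 \<le> g2 x \<and> g2 x \<le> g x0 + s*h"
    proof (cases "x \<le> x0 + t")
      case True
      then have "g2 x = g x0 + M*(x-x0)" using e2 x by auto
      moreover have "M*(x-x0) \<le> M*t" using True Mp by (simp add: mult_left_mono)
      moreover have "0 \<le> M*(x-x0)" using x Mp by simp
      moreover have "0 \<le> m*(h-t)" using mpos th by simp
      ultimately show ?thesis using teq by linarith
    next
      case False
      then have "g2 x = g x0 + M*t + m*(x-x0-t)" using e3 by auto
      moreover have "m*(x-x0-t) \<le> m*(h-t)" using False x mpos by (simp add: mult_left_mono)
      moreover have "0 \<le> m*(x-x0-t)" using False mpos by simp
      moreover have "0 \<le> M*t" using Mp t0 by simp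
      ultimately show ?thesis using teq by linarith
    qed
  qed
  show ?thesis using Q2 e1 fin bnd by blast
qed


lemma inc_case:
  fixes \<alpha> :: real and u :: "real \<Rightarrow> real" and \<epsilon> :: real
  assumes a0: "0 < \<alpha>" and a1: "\<alpha> < 1"
    and cu: "continuous_on {-1..1} u" and mu: "mono_on {-1..1} u" and ep: "\<epsilon> > 0"
  shows "\<exists>g. Q \<alpha> g 1 \<and> (\<forall>x \<in> {-1..1}. \<bar>u x - g x\<bar> \<le> \<epsilon>)"
proof -
  have "uniformly_continuous_on {-1..1} u"
    using compact_uniformly_continuous[OF cu] by simp
  then obtain d where d0: "d > 0" and dd: "\<And>x x'. x \<in> {-1..1} \<Longrightarrow> x' \<in> {-1..1} \<Longrightarrow>
      dist x' x < d \<Longrightarrow> dist (u x') (u x) < \<epsilon>/2"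
    unfolding uniformly_continuous_on_def using ep by (meson half_gt_zero)
  obtain N :: nat where N: "2/d < real N" using reals_Archimedean2 by blast
  have Npos: "N > 0" using N d0
    by (metis of_nat_0 gr0I divide_pos_pos zero_less_numeral order.asym)
  define h where "h = 2 / real N"
  have h0: "h > 0" unfolding h_def using Npos by simp
  have hd: "h < d" unfolding h_def using N d0 Npos by (simp add: field_simps)
  define xs where "xs n = -1 + h * real n" for n
  define \<delta> where "\<delta> = \<epsilon> / (2 * real N)"
  have \<delta>0: "\<delta> > 0" unfolding \<delta>_def using ep Npos by simp
  define z where "z n = u (xs n) + \<delta> * real n" for n
  have xsN: "xs N = 1" unfolding xs_def h_def using Npos by simp
  have xsin: "xs n \<in> {-1..1}" if "n \<le> N" for n
  proof -
    have "h * real n \<le> h * real N" using that h0 by (simp add: mult_left_mono)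
    moreover have "h * real N = 2" using xsN unfolding xs_def by simp
    moreover have "0 \<le> h * real n" using h0 by simp
    ultimately show ?thesis unfolding xs_def by auto
  qed
  have xsS: "xs (Suc n) = xs n + h" for n unfolding xs_def by (simp add: algebra_simps)
  have "\<exists>g. Q \<alpha> g (xs n) \<and> g (xs n) = z n \<and> (\<forall>x\<in>{-1..xs n}. \<bar>u x - g x\<bar> \<le> \<epsilon>)"
    if "n \<le> N" for n
    using that
  proof (induction n)
    case 0
    define g where "g x = z 0 + (x - xs 0)" for x
    have "pl_data g [] [1] [z 0 - xs 0]"
      unfolding pl_data_def g_def piece_def by (auto intro!: continuous_intros)
    moreover have "\<forall>m\<in>set [1::real]. \<exists>k::int. m = \<alpha> powi k"
      by (auto intro!: exI[of _ 0])
    ultimately have "Q \<alpha> g (xs 0)" unfolding Q_def by fastforce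
    moreover have "g (xs 0) = z 0" by (simp add: g_def)
    moreover have "\<forall>x\<in>{-1..xs 0}. \<bar>u x - g x\<bar> \<le> \<epsilon>"
      using ep by (simp add: xs_def g_def z_def)
    ultimately show ?case by blast
  next
    case (Suc n)
    then obtain g where gQ: "Q \<alpha> g (xs n)" and gz: "g (xs n) = z n"
      and ga: "\<forall>x\<in>{-1..xs n}. \<bar>u x - g x\<bar> \<le> \<epsilon>" by auto
    define s where "s = (z (Suc n) - z n) / h"
    have nN: "n \<le> N" "Suc n \<le> N" using Suc by auto
    have "u (xs n) \<le> u (xs (Suc n))"
      using mono_onD[OF mu xsin[OF nN(1)] xsin[OF nN(2)]] xsS h0 by simp
    then have zinc: "z n < z (Suc n)" unfolding z_def using \<delta>0 by (simp add: algebra_simps)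
    have s0: "s > 0" unfolding s_def using zinc h0 by simp
    have sh: "s * h = z (Suc n) - z n" unfolding s_def using h0 by simp
    obtain g' where g'Q: "Q \<alpha> g' (xs n + h)" and g'e: "\<forall>x\<le>xs n. g' x = g x"
      and g'f: "g' (xs n + h) = g (xs n) + s*h"
      and g'b: "\<forall>x\<in>{xs n..xs n+h}. g (xs n) \<le> g' x \<and> g' x \<le> g (xs n) + s*h"
      using Q_step[OF a0 a1 gQ order_refl h0 s0] by blast
    have "\<forall>x\<in>{-1..xs (Suc n)}. \<bar>u x - g' x\<bar> \<le> \<epsilon>"
    proof
      fix x assume x: "x \<in> {-1..xs (Suc n)}"
      show "\<bar>u x - g' x\<bar> \<le> \<epsilon>"
      proof (cases "x \<le> xs n")
        case True then show ?thesis using ga g'e x by auto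
      next
        case False
        have xx: "x \<in> {-1..1}" using x xsin[OF nN(2)] by auto
        have b: "z n \<le> g' x" "g' x \<le> z (Suc n)" using g'b False x xsS gz sh by auto
        have "dist x (xs n) < d" using False x xsS hd by (auto simp: dist_real_def)
        then have c1: "\<bar>u x - u (xs n)\<bar> < \<epsilon>/2" using dd[OF xsin[OF nN(1)] xx]
          by (simp add: dist_real_def)
        have "dist x (xs (Suc n)) < d" using False x xsS hd by (auto simp: dist_real_def)
        then have c2: "\<bar>u x - u (xs (Suc n))\<bar> < \<epsilon>/2" using dd[OF xsin[OF nN(2)] xx]
          by (simp add: dist_real_def)
        have "\<delta> * real (Suc n) \<le> \<delta> * real N" using nN \<delta>0 by (simp add: mult_left_mono)
        moreover have "\<delta> * real N = \<epsilon>/2" unfolding \<delta>_def using Npos by simp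
        moreover have "0 \<le> \<delta> * real n" using \<delta>0 by simp
        ultimately show ?thesis using b c1 c2 unfolding z_def by (auto simp: abs_le_iff abs_less_iff)
      qed
    qed
    moreover have "g' (xs (Suc n)) = z (Suc n)" using g'f gz sh xsS by simp
    ultimately show ?case using g'Q xsS by auto
  qed
  from this[OF order_refl] xsN show ?thesis by auto
qed

lemma Q_app: "Q \<alpha> g A \<Longrightarrow> alpha_power_pl \<alpha> g"
  unfolding Q_def alpha_power_pl_def by (metis mult_1)

lemma app_neg: assumes "alpha_power_pl \<alpha> g" shows "alpha_power_pl \<alpha> (\<lambda>x. - g x)"
proof -
  obtain bs ms cs c where pd: "pl_data g bs ms cs" and sl: "\<forall>m \<in> set ms. \<exists>k::int. m = c * \<alpha> powi k"
    using assms unfolding alpha_power_pl_def by blast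
  have "pl_data (\<lambda>x. - g x) bs (map uminus ms) (map uminus cs)"
    using pd unfolding pl_data_def by (auto intro!: continuous_intros)
  moreover have "\<forall>m \<in> set (map uminus ms). \<exists>k::int. m = (-c) * \<alpha> powi k" using sl by auto
  ultimately show ?thesis unfolding alpha_power_pl_def by blast
qed

theorem mainTheorem5:
  fixes \<alpha> :: real and u :: "real \<Rightarrow> real" and \<epsilon> :: real
  assumes "0 < \<alpha>" and "\<alpha> < 1"
    and "continuous_on {-1..1} u"
    and "mono_on {-1..1} u \<or> antimono_on {-1..1} u"
    and "\<epsilon> > 0"
  shows "\<exists>g. alpha_power_pl \<alpha> g \<and> (\<forall>x \<in> {-1..1}. \<bar>u x - g x\<bar> \<le> \<epsilon>)"
  using assms(4)
proof
  assume "mono_on {-1..1} u"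
  then show ?thesis using inc_case[OF assms(1,2,3) _ assms(5)] Q_app by blast
next
  assume am: "antimono_on {-1..1} u"
  have "mono_on {-1..1} (\<lambda>x. - u x)"
  proof (rule mono_onI)
    fix r s :: real assume "r \<in> {-1..1}" "s \<in> {-1..1}" "r \<le> s"
    then have "u s \<le> u r" using monotone_onD[OF am] by blast
    then show "- u r \<le> - u s" by simp
  qed
  moreover have "continuous_on {-1..1} (\<lambda>x. - u x)" using assms(3) by (intro continuous_intros)
  ultimately obtain g where "Q \<alpha> g 1" and ga: "\<forall>x \<in> {-1..1}. \<bar>- u x - g x\<bar> \<le> \<epsilon>"
    using inc_case[OF assms(1,2) _ _ assms(5)] by blast
  then have "alpha_power_pl \<alpha> (\<lambda>x. - g x)" using Q_app app_neg by blast
  moreover have "\<forall>x \<in> {-1..1}. \<bar>u x - (- g x)\<bar> \<le> \<epsilon>" using ga by (auto simp: abs_minus_commute)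
  ultimately show ?thesis by blast
qed

end
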